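(* Let $\mathbf A\in\mathbb R^{m\times n}$ have full column rank ($\operatorname{rank}\mathbf A=n$), with smallest singular value $\sigma_n(\mathbf A)>0$, and let $\mathbf b\in\mathbb R^m$ be such that $\mathbf A\mathbf x=\mathbf b$ is consistent (so $\mathbf A^\dagger\mathbf b$ is its unique solution). Fix a row partition $\{\mathcal I_1,\dots,\mathcal I_s\}$ of $[m]$ and a column partition $\{\mathcal J_1,\dots,\mathcal J_t\}$ of $[n]$, let $\beta=\max_{(\mathcal I,\mathcal J)\in\mathcal P}\|\mathbf A_{\mathcal I,\mathcal J}\|_2^2/\|\mathbf A_{\mathcal I,\mathcal J}\|_F^2$, and assume $0<\alpha<2/(t\beta)$. Let $\mathbf x^0\in\mathbb R^n$ be arbitrary and let $\mathbf x^k$ be the $k$th iterate of the doubly stochastic block Gauss--Seidel (DSBGS) algorithm described in the context. Then for every $k\ge0$, $$\mathbb E\big[\|\mathbf x^k-\mathbf A^\dagger\mathbf b\|_2^2\big]\le\Big(1-\frac{(2\alpha-t\beta\alpha^2)\sigma_n^2(\mathbf A)}{\|\mathbf A\|_F^2}\Big)^k\|\mathbf x^0-\mathbf A^\dagger\mathbf b\|_2^2 .$$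
   Context: Notation: $\mathbf A^\dagger$ is the Moore--Penrose pseudoinverse, $\|\cdot\|_F$ the Frobenius norm, $\|\cdot\|_2$ the Euclidean norm for vectors and spectral norm (largest singular value) for matrices. For $\mathcal I\subseteq[m]=\{1,\dots,m\}$ and $\mathcal J\subseteq[n]$, $\mathbf A_{\mathcal I,\mathcal J}$ is the submatrix of $\mathbf A$ with rows indexed by $\mathcal I$ and columns indexed by $\mathcal J$; $\mathbf I_{:,\mathcal J}$ denotes the columns of the identity matrix (of the appropriate order) indexed by $\mathcal J$. DSBGS algorithm: the sets $\mathcal I_1,\dots,\mathcal I_s$ are nonempty, pairwise disjoint with union $[m]$, and $\mathcal J_1,\dots,\mathcal J_t$ are nonempty, pairwise disjoint with union $[n]$; $\mathcal P=\{\mathcal I_1,\dots,\mathcal I_s\}\times\{\mathcal J_1,\dots,\mathcal J_t\}$ (in the definition of $\beta$ the maximum is over blocks with $\mathbf A_{\mathcal I,\mathcal J}\neq 0$). Given $\alpha>0$ and $\mathbf x^0$, for $k=1,2,\dots$: pick $(\mathcal I,\mathcal J)\in\mathcal P$ (independently of previous choices) with probability $\|\mathbf A_{\mathcal I,\mathcal J}\|_F^2/\|\mathbf A\|_F^2$, and set $$\mathbf x^k=\mathbf x^{k-1}-\alpha\,\frac{\mathbf I_{:,\mathcal J}(\mathbf A_{\mathcal I,\mathcal J})^{T}(\mathbf I_{:,\mathcal I})^{T}}{\|\mathbf A_{\mathcal I,\mathcal J}\|_F^2}\,(\mathbf A\mathbf x^{k-1}-\mathbf b).$$ The expectation $\mathbb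 E$ is over the random choices of the blocks. *)

theory Defs
  imports "HOL-Analysis.Analysis" "HOL-Probability.Probability_Mass_Function"
begin

text \<open>Zero-padded block: the m x n matrix agreeing with A on I x J and zero elsewhere.
  It has the same Frobenius and spectral norms as the submatrix A_{I,J}, and its transpose
  equals I_{:,J} (A_{I,J})^T (I_{:,I})^T.\<close>
definition blockmat :: "'m set \<Rightarrow> 'n set \<Rightarrow> real^'n^'m \<Rightarrow> real^'n^'m" where
  "blockmat I J A = (\<chi> i j. if i \<in> I \<and> j \<in> J then A $ i $ j else 0)"

definition frob_norm :: "real^'n::finite^'m::finite \<Rightarrow> real" where
  "frob_norm A = sqrt (\<Sum>i\<in>UNIV. \<Sum>j\<in>UNIV. (A $ i $ j)^2)"

definition spec_norm :: "real^'n::finite^'m::finite \<Rightarrow> real" where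
  "spec_norm A = onorm (\<lambda>x. A *v x)"

definition pinv :: "real^'n::finite^'m::finite \<Rightarrow> real^'m^'n" where
  "pinv A = (THE X. A ** X ** A = A \<and> X ** A ** X = X \<and>
                    transpose (A ** X) = A ** X \<and> transpose (X ** A) = X ** A)"

definition sigma_min :: "real^'n::finite^'m::finite \<Rightarrow> real" where
  "sigma_min A = sqrt (Min {e. \<exists>v. v \<noteq> 0 \<and> (transpose A ** A) *v v = e *s v})"

definition is_partition :: "'a set set \<Rightarrow> bool" where
  "is_partition P \<longleftrightarrow> (\<forall>I\<in>P. I \<noteq> {}) \<and> (\<forall>I\<in>P. \<forall>I'\<in>P. I \<noteq> I' \<longrightarrow> I \<inter> I' = {})
                      \<and> \<Union>P = UNIV"

definition beta_const :: "real^'n::finite^'m::finite \<Rightarrow> 'm set set \<Rightarrow> 'n set set \<Rightarrow> real" where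
  "beta_const A R C = Max {(spec_norm (blockmat I J A))^2 / (frob_norm (blockmat I J A))^2
                           | I J. I \<in> R \<and> J \<in> C \<and> blockmat I J A \<noteq> 0}"

definition block_pmf :: "real^'n::finite^'m::finite \<Rightarrow> 'm set set \<Rightarrow> 'n set set \<Rightarrow> ('m set \<times> 'n set) pmf" where
  "block_pmf A R C = embed_pmf (\<lambda>(I,J). if I \<in> R \<and> J \<in> C
       then (frob_norm (blockmat I J A))^2 / (frob_norm A)^2 else 0)"

definition dsbgs_step :: "real^'n::finite^'m::finite \<Rightarrow> real^'m \<Rightarrow> real \<Rightarrow> 'm set \<Rightarrow> 'n set \<Rightarrow> real^'n \<Rightarrow> real^'n" where
  "dsbgs_step A b \<alpha> I J x = x - (\<alpha> / (frob_norm (blockmat I J A))^2) *\<^sub>R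
        (transpose (blockmat I J A) *v (A *v x - b))"

primrec dsbgs_dist :: "real^'n::finite^'m::finite \<Rightarrow> real^'m \<Rightarrow> 'm set set \<Rightarrow> 'n set set \<Rightarrow> real
     \<Rightarrow> real^'n \<Rightarrow> nat \<Rightarrow> (real^'n) pmf" where
  "dsbgs_dist A b R C \<alpha> x0 0 = return_pmf x0"
| "dsbgs_dist A b R C \<alpha> x0 (Suc k) = bind_pmf (dsbgs_dist A b R C \<alpha> x0 k)
      (\<lambda>x. map_pmf (\<lambda>(I,J). dsbgs_step A b \<alpha> I J x) (block_pmf A R C))"

end

theory Submission imports Defs begin

lemma transpose_dot: "(transpose B *v y) \<bullet> x = y \<bullet> ((B::real^'n::finite^'m::finite) *v x)"
  by (simp add: dot_lmul_matrix)

lemma mat_eq_by_mult: "(\<And>x. (P::real^'n::finite^'m::finite) *v x = Q *v x) \<Longrightarrow> P = Q"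
  by (metis matrix_eq)

lemma pinv_left:
  fixes A :: "real^'n::finite^'m::finite"
  assumes inj: "inj ((*v) A)"
  shows "pinv A ** A = mat 1"
proof -
  define M where "M = transpose A ** A"
  have MA: "M *v v = transpose A *v (A *v v)" for v
    by (simp add: M_def matrix_vector_mul_assoc)
  have "\<forall>v. M *v v = 0 \<longrightarrow> v = 0"
  proof (intro allI impI)
    fix v assume "M *v v = 0"
    then have "(M *v v) \<bullet> v = 0" by simp
    moreover have "(M *v v) \<bullet> v = (A *v v) \<bullet> (A *v v)" by (simp only: MA transpose_dot)
    ultimately have "(A *v v) \<bullet> (A *v v) = 0" by simp
    then have "A *v v = A *v 0" by simp
    with inj show "v = 0" by (meson injD)
  qed
  then obtain K where KM: "K ** M = mat 1" using matrix_left_invertible_ker by blast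
  then have MK: "M ** K = mat 1" using matrix_left_right_inverse by blast
  have Mt: "transpose M = M" by (simp add: M_def matrix_transpose_mul)
  have "transpose K ** M = mat 1"
    by (metis MK Mt matrix_transpose_mul transpose_mat)
  then have Kt: "transpose K = K"
    by (metis MK matrix_mul_assoc matrix_mul_lid matrix_mul_rid)
  define X where "X = K ** transpose A"
  define P where "P = (\<lambda>X. A ** X ** A = A \<and> X ** A ** X = X \<and>
                    transpose (A ** X) = A ** X \<and> transpose (X ** A) = X ** A)"
  have XA: "X ** A = mat 1" using KM by (simp add: X_def M_def matrix_mul_assoc)
  have PX: "P X"
  proof -
    have 1: "A ** X ** A = A" by (metis XA matrix_mul_assoc matrix_mul_rid)
    have 2: "X ** A ** X = X" by (metis XA matrix_mul_lid)
    have 3: "transpose (A ** X) = A ** X"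
      using Kt by (simp add: X_def matrix_transpose_mul matrix_mul_assoc)
    show ?thesis unfolding P_def using 1 2 3 XA by simp
  qed
  have uniq: "Y = X" if "P Y" for Y
  proof -
    from that have c1: "A ** Y ** A = A" and c3: "transpose (A ** Y) = A ** Y"
      unfolding P_def by auto
    have "Y ** A = mat 1"
    proof (rule mat_eq_by_mult)
      fix x
      have "A *v ((Y ** A) *v x) = A *v x" using c1 by (metis matrix_vector_mul_assoc matrix_mul_assoc)
      then show "(Y ** A) *v x = mat 1 *v x" using inj by (simp add: injD)
    qed
    have "M ** Y = transpose A ** transpose (A ** Y)" using c3 by (simp add: M_def matrix_mul_assoc)
    also have "\<dots> = transpose (A ** Y ** A)" by (simp add: matrix_transpose_mul matrix_mul_assoc)
    finally have "M ** Y = transpose A" using c1 by simp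
    then have "K ** (M ** Y) = X" by (simp add: X_def)
    then show "Y = X" using KM by (metis matrix_mul_assoc matrix_mul_lid)
  qed
  have "pinv A = X" unfolding pinv_def using PX uniq unfolding P_def by blast
  then show ?thesis using XA by simp
qed


lemma quad_nonneg_zero:
  fixes a b :: real
  assumes "\<And>t. 0 \<le> a * t + b * t^2"
  shows "a = 0"
proof (rule ccontr)
  assume "a \<noteq> 0"
  define c where "c = \<bar>b\<bar> + 1"
  have c: "c > 0" "b \<le> c" by (auto simp: c_def)
  define t where "t = - a / (2 * c)"
  have "0 \<le> a * t + b * t^2" by (rule assms)
  also have "\<dots> \<le> a * t + c * t^2" using c by (intro add_left_mono mult_right_mono) auto
  also have "\<dots> = -(a^2) / (4 * c)" using c by (simp add: t_def power2_eq_square field_simps)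
  also have "\<dots> < 0" using c \<open>a \<noteq> 0\<close> by (simp add: divide_neg_pos)
  finally show False by simp
qed

lemma sigma_min_bound:
  fixes A :: "real^'n::finite^'m::finite"
  assumes inj: "inj ((*v) A)"
  shows "(sigma_min A)^2 * (norm v)^2 \<le> (norm (A *v v))^2"
proof -
  define M where "M = transpose A ** A"
  have MA: "(M *v x) \<bullet> y = (A *v x) \<bullet> (A *v y)" for x y
    by (simp only: M_def matrix_vector_mul_assoc[symmetric] transpose_dot)
  define E where "E = {e. \<exists>v. v \<noteq> 0 \<and> M *v v = e *s v}"
  have sm: "sigma_min A = sqrt (Min E)" by (simp add: sigma_min_def E_def M_def)
  have Enn: "e \<ge> 0" if eE: "e \<in> E" for e
  proof -
    obtain v where v: "v \<noteq> 0" "M *v v = e *s v" using eE E_def by auto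
    have "e * (v \<bullet> v) = (M *v v) \<bullet> v" using v by (simp add: scalar_mult_eq_scaleR)
    also have "\<dots> = (A *v v) \<bullet> (A *v v)" by (rule MA)
    finally have "e * (v \<bullet> v) \<ge> 0" by simp
    moreover have "v \<bullet> v > 0" using v by simp
    ultimately show ?thesis by (simp add: zero_le_mult_iff)
  qed
  have Efin: "finite E"
  proof -
    define f where "f = (\<lambda>e. SOME v. v \<noteq> 0 \<and> M *v v = e *s v)"
    have f: "f e \<noteq> 0 \<and> M *v f e = e *s f e" if eE: "e \<in> E" for e
    proof -
      have "\<exists>v. v \<noteq> 0 \<and> M *v v = e *s v" using eE E_def by auto
      then show ?thesis unfolding f_def by (rule someI_ex)
    qed
    have injf: "inj_on f E"
    proof (rule inj_onI)
      fix e e' assume "e \<in> E" "e' \<in> E" "f e = f e'"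
      then have h: "f e \<noteq> 0" "M *v f e = e *s f e" "M *v f e = e' *s f e"
        using f[of e] f[of e'] by metis+
      then have "e *\<^sub>R f e = e' *\<^sub>R f e" by (simp add: scalar_mult_eq_scaleR)
      then show "e = e'" using h(1) by (metis scaleR_cancel_right)
    qed
    have orth: "pairwise orthogonal (f ` E)"
    proof (clarsimp simp: pairwise_def)
      fix e e' assume ee: "e \<in> E" "e' \<in> E" "f e \<noteq> f e'"
      then have "e \<noteq> e'" by auto
      have "e * (f e \<bullet> f e') = (M *v f e) \<bullet> f e'" using f[OF ee(1)] by (simp add: scalar_mult_eq_scaleR)
      also have "\<dots> = (A *v f e) \<bullet> (A *v f e')" by (rule MA)
      also have "\<dots> = (M *v f e') \<bullet> f e" by (simp only: MA inner_commute[of "A *v f e"])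
      also have "\<dots> = e' * (f e \<bullet> f e')" using f[OF ee(2)] by (simp add: scalar_mult_eq_scaleR inner_commute)
      finally have "(e - e') * (f e \<bullet> f e') = 0" by (simp add: algebra_simps)
      with \<open>e \<noteq> e'\<close> show "orthogonal (f e) (f e')" by (simp add: orthogonal_def)
    qed
    have "0 \<notin> f ` E" using f by auto
    then have "independent (f ` E)" using orth pairwise_orthogonal_independent by blast
    then have "finite (f ` E)" by (rule finiteI_independent)
    then show ?thesis using injf finite_imageD by blast
  qed
  define Q where "Q = (\<lambda>x. (A *v x) \<bullet> (A *v x))"
  have "\<exists>u\<in>sphere 0 1. \<forall>y\<in>sphere 0 1. Q u \<le> Q y"
  proof (rule continuous_attains_inf)
    show "compact (sphere (0::real^'n) 1)" by simp
    have "axis undefined 1 \<in> sphere (0::real^'n) 1" by simp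
    then show "sphere (0::real^'n) 1 \<noteq> {}" by blast
    show "continuous_on (sphere 0 1) Q" unfolding Q_def by (intro continuous_intros)
  qed
  then obtain u where u: "norm u = 1" and umin: "\<And>y. norm y = 1 \<Longrightarrow> Q u \<le> Q y" by auto
  define \<mu> where "\<mu> = Q u"
  have Qscale: "Q (c *\<^sub>R x) = c^2 * Q x" for c x
    by (simp add: Q_def matrix_vector_mult_scaleR power2_eq_square)
  have Qge: "\<mu> * (norm x)^2 \<le> Q x" for x
  proof (cases "x = 0")
    case True then show ?thesis by (simp add: Q_def)
  next
    case False
    define y where "y = (1 / norm x) *\<^sub>R x"
    have "norm y = 1" using False by (simp add: y_def)
    then have "\<mu> \<le> Q y" using umin \<mu>_def by simp
    also have "Q y = Q x / (norm x)^2" by (simp add: y_def Qscale power_divide)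
    finally show ?thesis using False by (simp add: field_simps)
  qed
  have eig: "M *v u = \<mu> *s u"
  proof -
    define d where "d = M *v u - \<mu> *\<^sub>R u"
    have "0 \<le> (2 * (d \<bullet> d)) * t + (Q d - \<mu> * (d \<bullet> d)) * t^2" for t
    proof -
      have q0: "\<mu> * (norm (u + t *\<^sub>R d))^2 \<le> Q (u + t *\<^sub>R d)" by (rule Qge)
      have sq: "(x + t *\<^sub>R y) \<bullet> (x + t *\<^sub>R y) = x \<bullet> x + 2 * t * (x \<bullet> y) + t^2 * (y \<bullet> y)" for x y :: "'a::real_inner"
      proof -
        have "(x + t *\<^sub>R y) \<bullet> (x + t *\<^sub>R y) = x \<bullet> x + t * (x \<bullet> y) + t * (y \<bullet> x) + t * t * (y \<bullet> y)"
          by (simp add: inner_add_left inner_add_right distrib_left)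
        then show ?thesis by (simp add: inner_commute[of y x] power2_eq_square)
      qed
      moreover have "(norm (u + t *\<^sub>R d))^2 = 1 + 2 * t * (u \<bullet> d) + t^2 * (d \<bullet> d)"
        using u sq[of u d] by (simp add: power2_norm_eq_inner flip: norm_eq_1)
      moreover have "Q (u + t *\<^sub>R d) = \<mu> + 2 * t * ((M *v u) \<bullet> d) + t^2 * Q d"
        using sq[of "A *v u" "A *v d"] by (simp add: Q_def \<mu>_def MA matrix_vector_right_distrib matrix_vector_mult_scaleR)
      moreover have "(M *v u) \<bullet> d = d \<bullet> d + \<mu> * (u \<bullet> d)"
      proof -
        have "(M *v u - \<mu> *\<^sub>R u) \<bullet> d = (M *v u) \<bullet> d - \<mu> * (u \<bullet> d)" by (simp add: inner_diff_left)
        then show ?thesis unfolding d_def[symmetric] by simp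
      qed
      ultimately show ?thesis using q0 by (simp add: algebra_simps power2_eq_square)
    qed
    then have "2 * (d \<bullet> d) = 0" by (rule quad_nonneg_zero)
    then have "d = 0" by simp
    then show ?thesis by (simp add: d_def scalar_mult_eq_scaleR)
  qed
  have "u \<noteq> 0" using u by auto
  then have muE: "\<mu> \<in> E" using eig E_def by auto
  have minE: "Min E \<le> \<mu>" using Efin muE by simp
  have "Min E \<in> E" using Efin muE by (intro Min_in) auto
  then have "Min E \<ge> 0" by (rule Enn)
  then have "(sigma_min A)^2 = Min E" by (simp add: sm)
  then have "(sigma_min A)^2 * (norm v)^2 \<le> \<mu> * (norm v)^2" using minE by (simp add: mult_right_mono)
  also have "\<dots> \<le> Q v" by (rule Qge)
  also have "Q v = (norm (A *v v))^2" by (simp add: Q_def power2_norm_eq_inner)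
  finally show ?thesis .
qed


lemma partition_sum:
  fixes R :: "'a set set"
  assumes R: "is_partition R" and fin: "finite R"
  shows "(\<Sum>I\<in>R. if i \<in> I then g else (0::real)) = g"
proof -
  have RU: "\<Union>R = UNIV" and Rd: "\<And>I I'. I \<in> R \<Longrightarrow> I' \<in> R \<Longrightarrow> I \<noteq> I' \<Longrightarrow> I \<inter> I' = {}"
    using R unfolding is_partition_def by auto
  have "i \<in> \<Union>R" using RU by simp
  then obtain I0 where I0: "I0 \<in> R" "i \<in> I0" by (rule UnionE)
  have "(\<Sum>I\<in>R. if i \<in> I then g else (0::real)) = (\<Sum>I\<in>R. if I0 = I then g else 0)"
  proof (rule sum.cong)
    fix I assume "I \<in> R"
    then have "i \<in> I \<longleftrightarrow> I0 = I" using Rd[of I0 I] I0 by auto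
    then show "(if i \<in> I then g else 0) = (if I0 = I then g else 0)" by simp
  qed simp
  also have "\<dots> = g" using fin I0 by (simp add: sum.delta)
  finally show ?thesis .
qed

lemma sum4_swap:
  fixes X :: "'a \<Rightarrow> 'b \<Rightarrow> 'c \<Rightarrow> 'd \<Rightarrow> real"
  shows "(\<Sum>I\<in>R. \<Sum>J\<in>C. \<Sum>i\<in>U. \<Sum>j\<in>V. X I J i j) = (\<Sum>i\<in>U. \<Sum>j\<in>V. \<Sum>I\<in>R. \<Sum>J\<in>C. X I J i j)"
proof -
  have "(\<Sum>I\<in>R. \<Sum>J\<in>C. \<Sum>i\<in>U. \<Sum>j\<in>V. X I J i j) = (\<Sum>I\<in>R. \<Sum>i\<in>U. \<Sum>J\<in>C. \<Sum>j\<in>V. X I J i j)"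
    by (rule sum.cong[OF refl], rule sum.swap)
  also have "\<dots> = (\<Sum>I\<in>R. \<Sum>i\<in>U. \<Sum>j\<in>V. \<Sum>J\<in>C. X I J i j)"
    by (rule sum.cong[OF refl], rule sum.cong[OF refl], rule sum.swap)
  also have "\<dots> = (\<Sum>i\<in>U. \<Sum>I\<in>R. \<Sum>j\<in>V. \<Sum>J\<in>C. X I J i j)"
    by (rule sum.swap)
  also have "\<dots> = (\<Sum>i\<in>U. \<Sum>j\<in>V. \<Sum>I\<in>R. \<Sum>J\<in>C. X I J i j)"
    by (rule sum.cong[OF refl], rule sum.swap)
  finally show ?thesis .
qed

lemma double_partition_sum:
  fixes R :: "'m::finite set set" and C :: "'n::finite set set"
  assumes R: "is_partition R" and C: "is_partition C"
  shows "(\<Sum>I\<in>R. \<Sum>J\<in>C. \<Sum>i\<in>UNIV. \<Sum>j\<in>UNIV. (if i \<in> I \<and> j \<in> J then g i j else (0::real)))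
       = (\<Sum>i\<in>UNIV. \<Sum>j\<in>UNIV. g i j)"
proof -
  have fR: "finite R" and fC: "finite C" by (auto intro: finite_subset[OF subset_UNIV])
  have "(\<Sum>I\<in>R. \<Sum>J\<in>C. \<Sum>i\<in>UNIV. \<Sum>j\<in>UNIV. (if i \<in> I \<and> j \<in> J then g i j else (0::real)))
     = (\<Sum>i\<in>UNIV. \<Sum>j\<in>UNIV. \<Sum>I\<in>R. \<Sum>J\<in>C. (if i \<in> I \<and> j \<in> J then g i j else (0::real)))"
    by (rule sum4_swap)
  also have "\<dots> = (\<Sum>i\<in>UNIV. \<Sum>j\<in>UNIV. \<Sum>I\<in>R. (if i \<in> I then (\<Sum>J\<in>C. if j \<in> J then g i j else 0) else 0))"
    by (intro sum.cong refl) (auto simp: if_distrib)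
  also have "\<dots> = (\<Sum>i\<in>UNIV. \<Sum>j\<in>UNIV. g i j)"
    by (simp add: partition_sum[OF R fR] partition_sum[OF C fC])
  finally show ?thesis .
qed

lemma single_partition_sum:
  fixes R :: "'m::finite set set"
  assumes R: "is_partition R"
  shows "(\<Sum>I\<in>R. \<Sum>i\<in>UNIV. (if i \<in> I then g i else (0::real))) = (\<Sum>i\<in>UNIV. g i)"
proof -
  have fR: "finite R" by (auto intro: finite_subset[OF subset_UNIV])
  have "(\<Sum>I\<in>R. \<Sum>i\<in>UNIV. (if i \<in> I then g i else (0::real))) = (\<Sum>i\<in>UNIV. \<Sum>I\<in>R. (if i \<in> I then g i else (0::real)))"
    by (rule sum.swap)
  also have "\<dots> = (\<Sum>i\<in>UNIV. g i)" by (simp add: partition_sum[OF R fR])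
  finally show ?thesis .
qed

lemma frob_sq: "(frob_norm B)^2 = (\<Sum>i\<in>UNIV. \<Sum>j\<in>UNIV. (B $ i $ j)^2)"
  unfolding frob_norm_def by (simp add: sum_nonneg)

lemma frob_block_sq: "(frob_norm (blockmat I J A))^2 = (\<Sum>i\<in>UNIV. \<Sum>j\<in>UNIV. if i \<in> I \<and> j \<in> J then (A $ i $ j)^2 else 0)"
  unfolding frob_sq blockmat_def by (intro sum.cong refl) auto

lemma frob_total:
  fixes A :: "real^'n::finite^'m::finite"
  assumes R: "is_partition R" and C: "is_partition C"
  shows "(\<Sum>I\<in>R. \<Sum>J\<in>C. (frob_norm (blockmat I J A))^2) = (frob_norm A)^2"
  using double_partition_sum[OF R C, of "\<lambda>i j. (A$i$j)^2"] by (simp only: frob_block_sq frob_sq[of A])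

lemma frob_zero_iff: "frob_norm B = 0 \<longleftrightarrow> B = 0"
proof
  assume "frob_norm B = 0"
  then have "(\<Sum>i\<in>UNIV. \<Sum>j\<in>UNIV. (B $ i $ j)^2) = 0" using frob_sq[of B] by simp
  then have "\<forall>i. (\<Sum>j\<in>UNIV. (B $ i $ j)^2) = 0" by (simp add: sum_nonneg_eq_0_iff sum_nonneg)
  then have "\<forall>i j. B $ i $ j = 0" by (simp add: sum_nonneg_eq_0_iff)
  then show "B = 0" by (simp add: vec_eq_iff)
qed (simp add: frob_norm_def)

lemma block_pmf_pmf:
  fixes A :: "real^'n::finite^'m::finite"
  assumes R: "is_partition R" and C: "is_partition C" and A: "A \<noteq> 0"
  shows "pmf (block_pmf A R C) (I, J) = (if I \<in> R \<and> J \<in> C then (frob_norm (blockmat I J A))^2 / (frob_norm A)^2 else 0)"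
proof -
  define f where "f = (\<lambda>(I,J). if I \<in> R \<and> J \<in> C then (frob_norm (blockmat I J A))^2 / (frob_norm A)^2 else (0::real))"
  have F: "(frob_norm A)^2 > 0" using A frob_zero_iff[of A] by simp
  have nn: "\<And>x. 0 \<le> f x" by (auto simp: f_def)
  have fR: "finite R" and fC: "finite C" by (auto intro: finite_subset[OF subset_UNIV])
  have "(\<Sum>x\<in>UNIV. f x) = (\<Sum>x\<in>R \<times> C. f x)"
    by (rule sum.mono_neutral_right) (auto simp: f_def split: if_split_asm)
  also have "\<dots> = (\<Sum>I\<in>R. \<Sum>J\<in>C. (frob_norm (blockmat I J A))^2 / (frob_norm A)^2)"
    unfolding sum.cartesian_product f_def by (intro sum.cong refl) auto
  also have "\<dots> = (\<Sum>I\<in>R. \<Sum>J\<in>C. (frob_norm (blockmat I J A))^2) / (frob_norm A)^2"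
    by (simp add: sum_divide_distrib)
  also have "\<dots> = 1" using frob_total[OF R C, of A] F by simp
  finally have s1: "(\<Sum>x\<in>UNIV. f x) = 1" .
  have "(\<integral>\<^sup>+x. ennreal (f x) \<partial>count_space UNIV) = (\<Sum>x\<in>UNIV. ennreal (f x))"
    by (simp add: nn_integral_count_space_finite)
  also have "\<dots> = ennreal (\<Sum>x\<in>UNIV. f x)" using nn by (simp add: sum_ennreal)
  finally have "(\<integral>\<^sup>+x. ennreal (f x) \<partial>count_space UNIV) = 1" using s1 by simp
  then have "pmf (embed_pmf f) (I,J) = f (I,J)" using nn by (simp add: pmf_embed_pmf)
  moreover have "block_pmf A R C = embed_pmf f" unfolding block_pmf_def f_def by simp
  ultimately show ?thesis by (simp add: f_def)
qed

lemma spec_bound: "norm (B *v x) \<le> spec_norm B * norm x"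
  unfolding spec_norm_def by (rule onorm) simp

lemma spec_nonneg: "spec_norm B \<ge> 0"
  unfolding spec_norm_def by (rule onorm_pos_le) simp

lemma spec_transpose_bound: "(norm (transpose B *v y))^2 \<le> (spec_norm B)^2 * (norm y)^2"
proof -
  define z where "z = transpose B *v y"
  have "(norm z)^2 = z \<bullet> z" by (simp add: power2_norm_eq_inner)
  also have "\<dots> = y \<bullet> (B *v z)" unfolding z_def by (rule transpose_dot)
  also have "\<dots> \<le> norm y * norm (B *v z)" by (rule norm_cauchy_schwarz)
  also have "\<dots> \<le> norm y * (spec_norm B * norm z)" by (intro mult_left_mono spec_bound) simp
  finally have h: "(norm z)^2 \<le> spec_norm B * norm y * norm z" by (simp add: algebra_simps)
  have "norm z \<le> spec_norm B * norm y"
  proof (cases "norm z = 0")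
    case True then show ?thesis using spec_nonneg[of B] by simp
  next
    case False
    then have "norm z > 0" by simp
    then show ?thesis using h by (simp add: power2_eq_square)
  qed
  then have "(norm z)^2 \<le> (spec_norm B * norm y)^2" by (intro power_mono) auto
  then show ?thesis by (simp add: z_def power_mult_distrib)
qed


lemma beta_ge:
  fixes A :: "real^'n::finite^'m::finite"
  assumes "I \<in> R" "J \<in> C" "blockmat I J A \<noteq> 0"
  shows "(spec_norm (blockmat I J A))^2 / (frob_norm (blockmat I J A))^2 \<le> beta_const A R C"
proof -
  let ?g = "\<lambda>(I,J). (spec_norm (blockmat I J A))^2 / (frob_norm (blockmat I J A))^2"
  let ?S = "{(spec_norm (blockmat I J A))^2 / (frob_norm (blockmat I J A))^2
                           | I J. I \<in> R \<and> J \<in> C \<and> blockmat I J A \<noteq> 0}"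
  have "?S \<subseteq> ?g ` UNIV" by auto
  then have "finite ?S" by (rule finite_subset) simp
  moreover have "(spec_norm (blockmat I J A))^2 / (frob_norm (blockmat I J A))^2 \<in> ?S" using assms by blast
  ultimately show ?thesis unfolding beta_const_def by (rule Max_ge)
qed

lemma sq_minus: "(norm (x - c *\<^sub>R y))^2 = (norm x)^2 - 2 * c * (x \<bullet> y) + c^2 * (norm y)^2"
  for x y :: "'a::real_inner"
proof -
  have "(x - c *\<^sub>R y) \<bullet> (x - c *\<^sub>R y) = x \<bullet> x - c * (x \<bullet> y) - c * (y \<bullet> x) + c * c * (y \<bullet> y)"
    by (simp add: inner_diff_left inner_diff_right right_diff_distrib)
  then have "(x - c *\<^sub>R y) \<bullet> (x - c *\<^sub>R y) = x \<bullet> x - 2 * c * (x \<bullet> y) + c^2 * (y \<bullet> y)"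
    by (simp add: inner_commute[of y x] power2_eq_square)
  then show ?thesis by (simp only: power2_norm_eq_inner)
qed

lemma one_step:
  fixes A :: "real^'n::finite^'m::finite" and R :: "'m set set" and C :: "'n set set"
  assumes R: "is_partition R" and C: "is_partition C" and Ane: "A \<noteq> 0"
    and Axs: "A *v xs = b" and \<alpha>: "\<alpha> > 0" and \<beta>: "beta_const A R C \<ge> 0"
  shows "measure_pmf.expectation (map_pmf (\<lambda>(I,J). dsbgs_step A b \<alpha> I J x) (block_pmf A R C)) (\<lambda>y. (norm (y - xs))^2)
     \<le> (norm (x - xs))^2 - (2*\<alpha> - real (card C) * beta_const A R C * \<alpha>^2) / (frob_norm A)^2 * (norm (A *v (x - xs)))^2"
proof -
  define F where "F = (frob_norm A)^2"
  have F: "F > 0" using Ane frob_zero_iff[of A] by (simp add: F_def)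
  define \<beta> where "\<beta> = beta_const A R C"
  define e where "e = x - xs"
  define r where "r = A *v e"
  have r: "A *v x - b = r" using Axs by (simp add: r_def e_def matrix_vector_mult_diff_distrib)
  define B where "B = (\<lambda>I J. blockmat I J A)"
  define f where "f = (\<lambda>I J. (frob_norm (B I J))^2)"
  define rI where "rI = (\<lambda>I. (\<chi> i. if i \<in> I then r$i else 0) :: real^'m)"
  define N where "N = (\<lambda>I J. (norm (dsbgs_step A b \<alpha> I J x - xs))^2)"
  have fR: "finite R" and fC: "finite C" by (auto intro: finite_subset[OF subset_UNIV])
  have pm: "pmf (block_pmf A R C) (I,J) = (if I \<in> R \<and> J \<in> C then f I J / F else 0)" for I J
    using block_pmf_pmf[OF R C Ane] by (simp add: f_def F_def B_def)
  have "measure_pmf.expectation (map_pmf (\<lambda>(I,J). dsbgs_step A b \<alpha> I J x) (block_pmf A R C)) (\<lambda>y. (norm (y - xs))^2)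
      = measure_pmf.expectation (block_pmf A R C) (\<lambda>(I,J). N I J)"
    by (simp add: N_def case_prod_unfold)
  also have "\<dots> = (\<Sum>a\<in>R \<times> C. (case a of (I,J) \<Rightarrow> N I J) * pmf (block_pmf A R C) a)"
  proof (rule integral_measure_pmf_real)
    show "finite (R \<times> C)" using fR fC by simp
    fix a assume "a \<in> set_pmf (block_pmf A R C)"
    then have "pmf (block_pmf A R C) a \<noteq> 0" by (simp add: set_pmf_iff)
    then show "a \<in> R \<times> C" using pm by (cases a) (auto split: if_split_asm)
  qed
  also have "\<dots> = (\<Sum>I\<in>R. \<Sum>J\<in>C. N I J * (f I J / F))"
    unfolding sum.cartesian_product by (intro sum.cong refl) (auto simp: pm)
  also have "\<dots> \<le> (\<Sum>I\<in>R. \<Sum>J\<in>C. f I J / F * (norm e)^2 - 2 * \<alpha> / F * (r \<bullet> (B I J *v e))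
                      + \<alpha>^2 * \<beta> / F * (norm (rI I))^2)"
  proof (intro sum_mono)
    fix I J assume IJ: "I \<in> R" "J \<in> C"
    have step: "dsbgs_step A b \<alpha> I J x - xs = e - (\<alpha> / f I J) *\<^sub>R (transpose (B I J) *v r)"
      by (simp add: dsbgs_step_def r e_def f_def B_def)
    have dot: "e \<bullet> (transpose (B I J) *v r) = r \<bullet> (B I J *v e)"
      by (simp only: inner_commute[of e] transpose_dot)
    have NI: "N I J = (norm e)^2 - 2 * (\<alpha> / f I J) * (r \<bullet> (B I J *v e)) + (\<alpha> / f I J)^2 * (norm (transpose (B I J) *v r))^2"
      unfolding N_def step sq_minus dot ..
    have rInn: "0 \<le> \<alpha>^2 * \<beta> / F * (norm (rI I))^2" using \<beta> F by (simp add: \<beta>_def)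
    show "N I J * (f I J / F) \<le> f I J / F * (norm e)^2 - 2 * \<alpha> / F * (r \<bullet> (B I J *v e))
                      + \<alpha>^2 * \<beta> / F * (norm (rI I))^2"
    proof (cases "f I J = 0")
      case True
      then have "B I J = 0" using frob_zero_iff[of "B I J"] by (simp add: f_def)
      then show ?thesis using True rInn by simp
    next
      case False
      then have fpos: "f I J > 0" by (simp add: f_def)
      have Bnz: "B I J \<noteq> 0" using False by (auto simp: f_def frob_norm_def)
      have BrI: "transpose (B I J) *v r = transpose (B I J) *v rI I"
        by (auto simp: vec_eq_iff vector_matrix_mult_def B_def blockmat_def rI_def intro!: sum.cong)
      have "(norm (transpose (B I J) *v r))^2 \<le> (spec_norm (B I J))^2 * (norm (rI I))^2"
        unfolding BrI by (rule spec_transpose_bound)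
      also have "(spec_norm (B I J))^2 \<le> \<beta> * f I J"
      proof -
        have "(spec_norm (B I J))^2 / f I J \<le> \<beta>"
          using beta_ge[OF IJ, of A] Bnz by (simp add: B_def f_def \<beta>_def)
        then show ?thesis using fpos by (simp add: divide_le_eq)
      qed
      then have "(spec_norm (B I J))^2 * (norm (rI I))^2 \<le> \<beta> * f I J * (norm (rI I))^2"
        by (rule mult_right_mono) simp
      finally have tb: "(norm (transpose (B I J) *v r))^2 \<le> \<beta> * f I J * (norm (rI I))^2" .
      have "N I J * (f I J / F) = f I J / F * (norm e)^2 - 2 * \<alpha> / F * (r \<bullet> (B I J *v e))
               + \<alpha>^2 / (F * f I J) * (norm (transpose (B I J) *v r))^2"
        unfolding NI using fpos F by (simp add: field_simps power2_eq_square)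
      also have "\<alpha>^2 / (F * f I J) * (norm (transpose (B I J) *v r))^2 \<le> \<alpha>^2 / (F * f I J) * (\<beta> * f I J * (norm (rI I))^2)"
        using tb fpos F by (intro mult_left_mono) auto
      also have "\<alpha>^2 / (F * f I J) * (\<beta> * f I J * (norm (rI I))^2) = \<alpha>^2 * \<beta> / F * (norm (rI I))^2"
        using fpos F by (simp add: field_simps)
      finally show ?thesis by simp
    qed
  qed
  also have "\<dots> = (\<Sum>I\<in>R. \<Sum>J\<in>C. f I J) / F * (norm e)^2 - 2 * \<alpha> / F * (\<Sum>I\<in>R. \<Sum>J\<in>C. r \<bullet> (B I J *v e))
                 + \<alpha>^2 * \<beta> / F * (real (card C) * (\<Sum>I\<in>R. (norm (rI I))^2))"
    by (simp add: sum.distrib sum_subtractf sum_distrib_left sum_divide_distrib sum_distrib_right algebra_simps)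
  also have "(\<Sum>I\<in>R. \<Sum>J\<in>C. f I J) = F" unfolding f_def F_def B_def by (rule frob_total[OF R C])
  also have "(\<Sum>I\<in>R. \<Sum>J\<in>C. r \<bullet> (B I J *v e)) = (norm r)^2"
  proof -
    have "r \<bullet> (B I J *v e) = (\<Sum>i\<in>UNIV. \<Sum>j\<in>UNIV. if i \<in> I \<and> j \<in> J then r$i * (A$i$j * e$j) else 0)" for I J
      by (auto simp: inner_vec_def matrix_vector_mult_def B_def blockmat_def sum_distrib_left intro!: sum.cong)
    then have "(\<Sum>I\<in>R. \<Sum>J\<in>C. r \<bullet> (B I J *v e)) = (\<Sum>i\<in>UNIV. \<Sum>j\<in>UNIV. r$i * (A$i$j * e$j))"
      by (simp add: double_partition_sum[OF R C])
    also have "\<dots> = r \<bullet> r" by (simp add: inner_vec_def r_def matrix_vector_mult_def sum_distrib_left)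
    finally show ?thesis by (simp add: power2_norm_eq_inner)
  qed
  also have "(\<Sum>I\<in>R. (norm (rI I))^2) = (norm r)^2"
  proof -
    have "(norm (rI I))^2 = (\<Sum>i\<in>UNIV. if i \<in> I then (r$i)^2 else 0)" for I
      unfolding power2_norm_eq_inner by (auto simp: inner_vec_def rI_def power2_eq_square intro!: sum.cong)
    then have "(\<Sum>I\<in>R. (norm (rI I))^2) = (\<Sum>i\<in>UNIV. (r$i)^2)"
      by (simp add: single_partition_sum[OF R])
    moreover have "(\<Sum>i\<in>UNIV. (r$i)^2) = (norm r)^2" unfolding power2_norm_eq_inner by (simp add: inner_vec_def power2_eq_square)
    ultimately show ?thesis by simp
  qed
  also have "F / F * (norm e)^2 - 2 * \<alpha> / F * (norm r)^2 + \<alpha>^2 * \<beta> / F * (real (card C) * (norm r)^2)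
      = (norm e)^2 - (2*\<alpha> - real (card C) * \<beta> * \<alpha>^2) / F * (norm r)^2"
    using F by (simp add: field_simps)
  finally show ?thesis by (simp add: F_def \<beta>_def e_def r_def)
qed


theorem theorem3:
  fixes A :: "real^'n::finite^'m::finite" and b :: "real^'m" and x0 :: "real^'n"
    and R :: "'m set set" and C :: "'n set set" and \<alpha> :: real and k :: nat
  assumes "rank A = CARD('n)"
    and "\<exists>x. A *v x = b"
    and "is_partition R" and "is_partition C"
    and "0 < \<alpha>" and "\<alpha> < 2 / (real (card C) * beta_const A R C)"
  shows "measure_pmf.expectation (dsbgs_dist A b R C \<alpha> x0 k) (\<lambda>x. (norm (x - pinv A *v b))^2)
     \<le> (1 - (2 * \<alpha> - real (card C) * beta_const A R C * \<alpha>^2) * (sigma_min A)^2 / (frob_norm A)^2) ^ k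
        * (norm (x0 - pinv A *v b))^2"
proof -
  note R = assms(3) and C = assms(4) and \<alpha> = assms(5) and \<alpha>2 = assms(6)
  have inj: "inj ((*v) A)" using assms(1) full_rank_injective by blast
  have Ane: "A \<noteq> 0"
  proof
    assume "A = 0"
    then have "rank A = 0" by simp
    with assms(1) show False by simp
  qed
  obtain xs0 where xs0: "A *v xs0 = b" using assms(2) by blast
  define xs where "xs = pinv A *v b"
  have "xs = xs0" unfolding xs_def xs0[symmetric]
    by (simp add: matrix_vector_mul_assoc pinv_left[OF inj])
  then have Axs: "A *v xs = b" using xs0 by simp
  define t where "t = real (card C)"
  define \<beta> where "\<beta> = beta_const A R C"
  define F where "F = (frob_norm A)^2"
  have F: "F > 0" using Ane frob_zero_iff[of A] by (simp add: F_def)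
  have "0 < 2 / (t * \<beta>)" using \<alpha> \<alpha>2 unfolding t_def \<beta>_def by linarith
  then have tb: "t * \<beta> > 0" by (simp add: zero_less_divide_iff)
  have t0: "t \<ge> 0" by (simp add: t_def)
  then have b0: "\<beta> \<ge> 0" using tb by (metis less_eq_real_def mult_eq_0_iff zero_less_mult_pos)
  have "\<alpha> * (t * \<beta>) < 2" using \<alpha>2 tb by (simp add: t_def \<beta>_def less_divide_eq)
  then have kappa: "2 * \<alpha> - t * \<beta> * \<alpha>^2 \<ge> 0" using \<alpha>
    by (simp add: power2_eq_square algebra_simps)
  define \<rho> where "\<rho> = 1 - (2 * \<alpha> - t * \<beta> * \<alpha>^2) * (sigma_min A)^2 / F"
  define g where "g = (\<lambda>x::real^'n. (norm (x - xs))^2)"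
  define stepd where "stepd = (\<lambda>x. map_pmf (\<lambda>(I,J). dsbgs_step A b \<alpha> I J x) (block_pmf A R C))"
  have os: "measure_pmf.expectation (stepd x) g \<le> \<rho> * g x" for x
  proof -
    have "measure_pmf.expectation (stepd x) g
        \<le> (norm (x - xs))^2 - (2*\<alpha> - t * \<beta> * \<alpha>^2) / F * (norm (A *v (x - xs)))^2"
      unfolding stepd_def g_def t_def \<beta>_def F_def
      by (rule one_step[OF R C Ane Axs \<alpha> b0[unfolded \<beta>_def]])
    also have "\<dots> \<le> (norm (x - xs))^2 - (2*\<alpha> - t * \<beta> * \<alpha>^2) / F * ((sigma_min A)^2 * (norm (x - xs))^2)"
      using sigma_min_bound[OF inj, of "x - xs"] kappa F
      by (intro diff_left_mono mult_left_mono) auto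
    also have "\<dots> = \<rho> * g x" by (simp add: \<rho>_def g_def algebra_simps)
    finally show ?thesis .
  qed
  have rho0: "\<rho> \<ge> 0"
  proof -
    define x1 where "x1 = xs + axis undefined (1::real)"
    have "0 \<le> measure_pmf.expectation (stepd x1) g" by (simp add: g_def)
    also have "\<dots> \<le> \<rho> * g x1" by (rule os)
    finally have "0 \<le> \<rho> * g x1" .
    moreover have "g x1 > 0" by (simp add: g_def x1_def)
    ultimately show ?thesis by (simp add: zero_le_mult_iff)
  qed
  define D where "D = dsbgs_dist A b R C \<alpha> x0"
  have Dsuc: "D (Suc n) = D n \<bind> stepd" for n by (simp add: D_def stepd_def)
  have finB: "finite (set_pmf (block_pmf A R C))" by (rule finite_subset[OF subset_UNIV]) simp
  have finS: "finite (set_pmf (stepd x))" for x using finB by (simp add: stepd_def)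
  have finD: "finite (set_pmf (D n))" for n
  proof (induction n)
    case 0 then show ?case by (simp add: D_def)
  next
    case (Suc n) then show ?case using finS by (simp add: Dsuc set_bind_pmf)
  qed
  have main: "measure_pmf.expectation (D n) g \<le> \<rho> ^ n * g x0" for n
  proof (induction n)
    case 0 then show ?case by (simp add: D_def)
  next
    case (Suc n)
    have "measure_pmf.expectation (D (Suc n)) g = (\<Sum>a\<in>set_pmf (D n). pmf (D n) a *\<^sub>R measure_pmf.expectation (stepd a) g)"
      unfolding Dsuc by (rule pmf_expectation_bind[OF finD finS]) simp
    also have "\<dots> \<le> (\<Sum>a\<in>set_pmf (D n). pmf (D n) a *\<^sub>R (\<rho> * g a))"
      by (intro sum_mono) (simp add: os mult_left_mono)
    also have "\<dots> = \<rho> * (\<Sum>a\<in>set_pmf (D n). pmf (D n) a *\<^sub>R g a)"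
      by (simp add: sum_distrib_left algebra_simps)
    also have "(\<Sum>a\<in>set_pmf (D n). pmf (D n) a *\<^sub>R g a) = measure_pmf.expectation (D n) g"
      by (rule integral_measure_pmf[OF finD, symmetric]) simp
    also have "\<rho> * \<dots> \<le> \<rho> * (\<rho> ^ n * g x0)" using Suc.IH rho0 by (rule mult_left_mono)
    finally show ?case by simp
  qed
  show ?thesis using main[of k] by (simp add: D_def g_def xs_def \<rho>_def t_def \<beta>_def F_def)
qed

end
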